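(* Let $s\in\tfrac12\mathbb{Z}_{>0}$, $a_j(u)=\sinh[u+(2s+1-j)\lambda]$, $b_j(\lambda)=\sqrt{\sinh(j\lambda)\sinh[\lambda(2s+1-j)]}$ (so $b_0=b_{2s+1}=0$), $q=e^\lambda$, $[n]=\sinh(n\lambda)/\sinh\lambda$, $[n]!=[n]\cdots[1]$, $[0]!=1$, $\left[\begin{array}{c}m\\k\end{array}\right]=\frac{[m]!}{[m-k]![k]!}$, and $$f^{(p)}(\sigma;u)=\sum_{k=0}^p(-e^{2\lambda\sigma})^k\left[\begin{array}{c}p\\k\end{array}\right]\prod_{j=1}^k\sinh[u+(j-1)\lambda]\prod_{j=k+1}^p\sinh[u+(2s+j-p)\lambda].$$ Let $\sigma\in\{-s,-s+1,\ldots,s\}$. Then, with $h^{\rm out}_1,h^{\rm out}_2,h^{\rm in}_1$ and $v^{\rm in}_1,v^{\rm out}_1$ arbitrary, the choices $$h^{\rm in}_2=\frac{h^{\rm in}_1h^{\rm out}_2}{h^{\rm out}_1}e^{2\lambda\sigma},\qquad v^{\rm out}_j=a_1(u)\frac{h^{\rm in}_1v^{\rm in}_j}{h^{\rm out}_1}\frac{f^{(j-1)}(\sigma;u-\lambda)}{f^{(j-1)}(\sigma;u)},\qquad v^{\rm in}_{j+1}=\frac{1}{b_j(\lambda)}\frac{v^{\rm in}_jh^{\rm out}_2}{h^{\rm out}_1}\frac{f^{(j)}(\sigma;u)}{f^{(j-1)}(\sigma;u)}$$ solve the system, for $j=1,\ldots,2s+1$, $$a_j(u)v^{\rm in}_jh^{\rm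 in}_1+b_{j-1}(\lambda)v^{\rm in}_{j-1}h^{\rm in}_2=v^{\rm out}_jh^{\rm out}_1,$$ $$a_{2s+2-j}(u)v^{\rm in}_jh^{\rm in}_2+b_j(\lambda)v^{\rm in}_{j+1}h^{\rm in}_1=v^{\rm out}_jh^{\rm out}_2.$$ In other words, the $R$-matrix $R^{(1,2s)}(u)$ has the property of pair-propagation through a vertex: $R(u)_{\mu\alpha}^{\nu\beta}v^{\rm in}_\beta h^{\rm in}_\nu=v^{\rm out}_\alpha h^{\rm out}_\mu$.
   Context: $R^{(1,2s)}(u)$ acts on $\mathbb{C}^2\otimes\mathbb{C}^{2s+1}$ with non-zero entries $R_{1j}^{1j}=a_j(u)$, $R_{2j}^{2j}=a_{2s+2-j}(u)$, $R_{1\,j+1}^{2\,j}=R_{2\,j}^{1\,j+1}=b_j(\lambda)$. Pair-propagation means existence of vectors $h^{\rm in},h^{\rm out}\in\mathbb{C}^2$, $v^{\rm in},v^{\rm out}\in\mathbb{C}^{2s+1}$ with $R(u)_{\mu\alpha}^{\nu\beta}v^{\rm in}_\beta h^{\rm in}_\nu=v^{\rm out}_\alpha h^{\rm out}_\mu$, which written out is the displayed system (terms with $b_0$ or $b_{2s+1}$ vanish). *)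

theory Defs
  imports Complex_Main
begin

(* Convention: the spin s is encoded by n = 2s (a positive natural number);
   lam is the crossing parameter lambda, u the spectral parameter. *)

definition a_coef :: "nat \<Rightarrow> complex \<Rightarrow> complex \<Rightarrow> nat \<Rightarrow> complex" where
  "a_coef n lam u j = sinh (u + (of_nat n + 1 - of_nat j) * lam)"

definition b_coef :: "nat \<Rightarrow> complex \<Rightarrow> nat \<Rightarrow> complex" where
  "b_coef n lam j = csqrt (sinh (of_nat j * lam) * sinh (lam * (of_nat n + 1 - of_nat j)))"

definition qnum :: "complex \<Rightarrow> nat \<Rightarrow> complex" where
  "qnum lam k = sinh (of_nat k * lam) / sinh lam"

definition qfact :: "complex \<Rightarrow> nat \<Rightarrow> complex" where
  "qfact lam k = (\<Prod>i = 1..k. qnum lam i)"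

definition qbinom :: "complex \<Rightarrow> nat \<Rightarrow> nat \<Rightarrow> complex" where
  "qbinom lam m k = qfact lam m / (qfact lam (m - k) * qfact lam k)"

definition f_poly :: "nat \<Rightarrow> complex \<Rightarrow> nat \<Rightarrow> complex \<Rightarrow> complex \<Rightarrow> complex" where
  "f_poly n lam p sigma u =
     (\<Sum>k = 0..p. (- exp (2 * lam * sigma)) ^ k * qbinom lam p k
        * (\<Prod>j = 1..k. sinh (u + (of_nat j - 1) * lam))
        * (\<Prod>j = k + 1..p. sinh (u + (of_nat n + of_nat j - of_nat p) * lam)))"

end

theory Submission
  imports Defs
begin

lemma sinh_exp: "sinh (x::complex) = (exp x - inverse (exp x)) / 2"
  by (simp add: sinh_def exp_minus scaleR_conv_of_real field_simps)

lemma sinh_id1: "sinh (a + b) * sinh (w + a) = sinh a * sinh (w + a + b) + sinh b * sinh (w::complex)"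
  by (simp add: sinh_exp exp_add exp_diff field_simps)

lemma sinh_id2: "sinh (w + a) * sinh (w + b) - sinh w * sinh (w + a + b) = sinh a * sinh (b::complex)"
  by (simp add: sinh_exp exp_add exp_diff field_simps)

lemma sinh_pascal1: "sinh (a + b) = exp a * sinh b + sinh a / exp (b::complex)"
  by (simp add: sinh_exp exp_add exp_diff field_simps)

lemma sinh_pascal2: "sinh (a + b) = sinh b / exp a + exp b * sinh (a::complex)"
  by (simp add: sinh_exp exp_add exp_diff field_simps)

lemma sinh_shift1: "sinh (u + c) - sinh u / exp c = exp u * sinh (c::complex)"
  by (simp add: sinh_exp exp_add exp_diff field_simps)

lemma sinh_shift2: "sinh (u + c) - exp c * sinh u = sinh (c::complex) / exp u"
  by (simp add: sinh_exp exp_add exp_diff field_simps)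

definition Pp :: "complex \<Rightarrow> complex \<Rightarrow> nat \<Rightarrow> complex" where
  "Pp lam u k = (\<Prod>j = 1..k. sinh (u + (of_nat j - 1) * lam))"

definition Qp :: "nat \<Rightarrow> complex \<Rightarrow> nat \<Rightarrow> complex \<Rightarrow> nat \<Rightarrow> complex" where
  "Qp n lam p u k = (\<Prod>j = k + 1..p. sinh (u + (of_nat n + of_nat j - of_nat p) * lam))"

definition Rp :: "complex \<Rightarrow> nat \<Rightarrow> complex \<Rightarrow> nat \<Rightarrow> complex" where
  "Rp lam N u k = (\<Prod>j = k + 1..N. sinh (u + of_nat j * lam))"

lemma f_poly_alt: "f_poly n lam p sigma u =
  (\<Sum>k = 0..p. (- exp (2 * lam * sigma)) ^ k * qbinom lam p k * Pp lam u k * Qp n lam p u k)"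
  by (simp add: f_poly_def Pp_def Qp_def)

lemma Pp_0 [simp]: "Pp lam u 0 = 1" by (simp add: Pp_def)

lemma Pp_Suc: "Pp lam u (Suc k) = Pp lam u k * sinh (u + of_nat k * lam)"
  by (simp add: Pp_def)

lemma Pp_shift: "Pp lam u (Suc k) = sinh u * Pp lam (u + lam) k"
proof (induction k)
  case 0 then show ?case by (simp add: Pp_def)
next
  case (Suc k)
  have "Pp lam u (Suc (Suc k)) = Pp lam u (Suc k) * sinh (u + of_nat (Suc k) * lam)"
    by (rule Pp_Suc)
  also have "\<dots> = sinh u * (Pp lam (u + lam) k * sinh (u + lam + of_nat k * lam))"
    by (simp add: Suc algebra_simps)
  also have "\<dots> = sinh u * Pp lam (u + lam) (Suc k)" by (simp add: Pp_Suc)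
  finally show ?case .
qed

lemma Pp_shiftm: "Pp lam (u - lam) (Suc k) = sinh (u - lam) * Pp lam u k"
  using Pp_shift[of lam "u - lam" k] by simp

lemma Qp_Suc: "Qp n lam (Suc p) u (Suc k) = Qp n lam p u k"
  unfolding Qp_def Suc_eq_plus1[symmetric]
  by (subst prod.shift_bounds_cl_Suc_ivl) (simp add: algebra_simps del: prod.cl_ivl_Suc)

lemma Qp_top: "k \<le> p \<Longrightarrow> Qp n lam (Suc p) u k = Qp n lam p (u - lam) k * sinh (u + of_nat n * lam)"
proof -
  assume kp: "k \<le> p"
  show ?thesis
  unfolding Qp_def Suc_eq_plus1[symmetric] prod.cl_ivl_Suc
  using kp apply (simp only: if_not_P[of "Suc p < Suc k"] not_less Suc_le_mono)
  apply (intro arg_cong2[where f="(*)"] prod.cong)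
    apply (auto simp: algebra_simps)
  done
qed

lemma Qp_bot: "k \<le> p \<Longrightarrow> Qp n lam (Suc p) u k = sinh (u + (of_nat n + of_nat k - of_nat p) * lam) * Qp n lam p u k"
proof -
  assume "k \<le> p"
  then have "Qp n lam (Suc p) u k = sinh (u + (of_nat n + of_nat (Suc k) - of_nat (Suc p)) * lam) * Qp n lam (Suc p) u (Suc k)"
    unfolding Qp_def by (subst prod.atLeast_Suc_atMost) auto
  moreover have "of_nat n + of_nat (Suc k) - of_nat (Suc p) = (of_nat n + of_nat k - of_nat p :: complex)" by simp
  ultimately show ?thesis by (simp only: Qp_Suc)
qed

lemma Qp_diag [simp]: "Qp n lam p u p = 1" by (simp add: Qp_def)

lemma Rp_Suc: "k \<le> N \<Longrightarrow> Rp lam (Suc N) u k = Rp lam N u k * sinh (u + of_nat (Suc N) * lam)"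
  unfolding Rp_def by simp

lemma Rp_shift: "Rp lam (Suc N) u (Suc k) = Rp lam N (u + lam) k"
  unfolding Rp_def Suc_eq_plus1[symmetric]
  by (subst prod.shift_bounds_cl_Suc_ivl) (simp add: algebra_simps del: prod.cl_ivl_Suc)

lemma Rp_diag [simp]: "Rp lam N u N = 1" by (simp add: Rp_def)

lemma Qp_Rp: "Qp n lam n u k = Rp lam n u k"
  by (simp add: Qp_def Rp_def)

definition lgen :: "complex \<Rightarrow> nat \<Rightarrow> bool" where
  "lgen lam N = (\<forall>j \<in> {1..N}. sinh (of_nat j * lam) \<noteq> 0)"

lemma qnum_nz: "lgen lam N \<Longrightarrow> 1 \<le> i \<Longrightarrow> i \<le> N \<Longrightarrow> qnum lam i \<noteq> 0"
  unfolding lgen_def qnum_def using bspec[of "{1..N}" _ 1] by force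

lemma qfact_Suc: "qfact lam (Suc k) = qfact lam k * qnum lam (Suc k)"
  by (simp add: qfact_def)

lemma qfact_nz: "lgen lam N \<Longrightarrow> k \<le> N \<Longrightarrow> qfact lam k \<noteq> 0"
proof (induction k)
  case 0 then show ?case by (simp add: qfact_def)
next
  case (Suc k) then show ?case using qnum_nz[of lam N "Suc k"] by (simp add: qfact_Suc)
qed

lemma qbinom_0: "lgen lam N \<Longrightarrow> p \<le> N \<Longrightarrow> qbinom lam p 0 = 1"
  using qfact_nz[of lam N p] by (simp add: qbinom_def qfact_def[of lam 0])

lemma qbinom_diag: "lgen lam N \<Longrightarrow> p \<le> N \<Longrightarrow> qbinom lam p p = 1"
  using qfact_nz[of lam N p] by (simp add: qbinom_def qfact_def[of lam 0])

lemma qb_Q1: assumes g: "lgen lam N" and kp: "k < p" "p \<le> N"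
  shows "qbinom lam p k * qnum lam (p - k) = qbinom lam p (Suc k) * qnum lam (Suc k)"
proof -
  have d: "p - k = Suc (p - Suc k)" using kp by simp
  have nz: "qfact lam (p - Suc k) \<noteq> 0" "qfact lam k \<noteq> 0" "qnum lam (p - k) \<noteq> 0" "qnum lam (Suc k) \<noteq> 0"
    using qfact_nz[OF g] qnum_nz[OF g] kp by auto
  show ?thesis unfolding qbinom_def d qfact_Suc using nz d by (simp add: field_simps)
qed

lemma qb_Q2: assumes g: "lgen lam N" and kp: "k < p" "Suc p \<le> N"
  shows "qbinom lam (Suc p) (Suc k) * qnum lam (p - k) = qbinom lam p (Suc k) * qnum lam (Suc p)"
proof -
  have d: "p - k = Suc (p - Suc k)" using kp by simp
  have nz: "qfact lam (p - Suc k) \<noteq> 0" "qfact lam k \<noteq> 0" "qnum lam (p - k) \<noteq> 0" "qnum lam (Suc k) \<noteq> 0"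
    using qfact_nz[OF g] qnum_nz[OF g] kp by auto
  show ?thesis unfolding qbinom_def d qfact_Suc diff_Suc_Suc using nz d by (simp add: field_simps)
qed

lemma qb_Q3: assumes g: "lgen lam N" and kp: "k \<le> p" "Suc p \<le> N"
  shows "qbinom lam p k * qnum lam (Suc p) = qbinom lam (Suc p) (Suc k) * qnum lam (Suc k)"
proof -
  have nz: "qfact lam (p - k) \<noteq> 0" "qfact lam k \<noteq> 0" "qnum lam (Suc k) \<noteq> 0"
    using qfact_nz[OF g] qnum_nz[OF g] kp by auto
  show ?thesis unfolding qbinom_def qfact_Suc diff_Suc_Suc using nz by (simp add: field_simps)
qed

lemma exp_nat: "exp (of_nat j * lam) = exp lam ^ j" for lam :: complex
  by (rule exp_of_nat_mult)

lemma qb_pascal: assumes g: "lgen lam N" and kp: "k < n" "Suc n \<le> N"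
    and w: "w = exp lam \<or> w = inverse (exp lam)"
  shows "qbinom lam (Suc n) (Suc k) = w ^ Suc k * qbinom lam n (Suc k) + qbinom lam n k / w ^ (n - k)"
proof -
  have d: "n - k = Suc (n - Suc k)" using kp by simp
  have nz: "qfact lam (n - Suc k) \<noteq> 0" "qfact lam k \<noteq> 0" "qnum lam (n - k) \<noteq> 0" "qnum lam (Suc k) \<noteq> 0"
     "qfact lam n \<noteq> 0" "w \<noteq> 0"
    using qfact_nz[OF g] qnum_nz[OF g] kp w g unfolding lgen_def by auto
  have "1 \<in> {1..N}" using kp by simp
  then have "sinh (of_nat 1 * lam) \<noteq> 0" using g unfolding lgen_def by blast
  then have sl: "sinh lam \<noteq> 0" by simp
  have sp: "sinh (of_nat (Suc n) * lam) = w ^ Suc k * sinh (of_nat (n - k) * lam) + sinh (of_nat (Suc k) * lam) / w ^ (n - k)"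
  proof -
    have e: "of_nat (Suc n) * lam = of_nat (Suc k) * lam + of_nat (n - k) * lam"
      using kp by (simp add: of_nat_diff algebra_simps)
    show ?thesis using w
    proof
      assume "w = exp lam" then show ?thesis
        unfolding e sinh_pascal1 exp_nat by simp
    next
      assume wd: "w = inverse (exp lam)" show ?thesis
        unfolding e sinh_pascal2 exp_nat wd by (simp add: power_inverse field_simps)
    qed
  qed
  have qn: "qnum lam (Suc n) = w ^ Suc k * qnum lam (Suc (n - Suc k)) + qnum lam (Suc k) / w ^ (Suc (n - Suc k))"
    unfolding qnum_def sp d[symmetric] by (simp add: add_divide_distrib)
  show ?thesis unfolding qbinom_def d qfact_Suc diff_Suc_Suc qn using nz d
    by (simp add: field_simps)
qed

definition Hf :: "complex \<Rightarrow> nat \<Rightarrow> complex \<Rightarrow> complex \<Rightarrow> complex" where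
  "Hf lam N e u = (\<Sum>k = 0..N. (- e) ^ k * qbinom lam N k * Pp lam u k * Rp lam N u k)"

lemma H_rec:
  assumes g: "lgen lam N" and nN: "Suc n \<le> N" and w: "w = exp lam \<or> w = inverse (exp lam)"
  shows "Hf lam (Suc n) e u = sinh (u + of_nat (Suc n) * lam) * Hf lam n (e * w) u
           - e / w ^ n * sinh u * Hf lam n (e * w) (u + lam)"
proof -
  have wnz: "w \<noteq> 0" using w by auto
  have pw: "(- (e * w)) ^ j = (- e) ^ j * w ^ j" for j
    by (metis minus_mult_left power_mult_distrib)
  define h where "h k = (- e) ^ k * qbinom lam (Suc n) k * Pp lam u k * Rp lam (Suc n) u k" for k
  define a where "a k = (- (e * w)) ^ k * qbinom lam n k * Pp lam u k * Rp lam n u k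
       * sinh (u + of_nat (Suc n) * lam)" for k
  define b where "b k = (- e) ^ Suc k * qbinom lam n k / w ^ (n - k) * (sinh u * Pp lam (u + lam) k)
       * Rp lam n (u + lam) k" for k
  define A where "A k = (if k \<le> n then a k else 0)" for k
  define B where "B k = (if k = 0 then 0 else b (k - 1))" for k
  have hterm: "h k = A k + B k" if "k \<le> Suc n" for k
  proof (cases k)
    case 0 then show ?thesis
      using g nN unfolding h_def A_def B_def a_def
      by (simp add: qbinom_0 Rp_Suc)
  next
    case (Suc k')
    show ?thesis
    proof (cases "k' < n")
      case True
      have pas: "qbinom lam (Suc n) (Suc k') = w ^ Suc k' * qbinom lam n (Suc k') + qbinom lam n k' / w ^ (n - k')"
        by (rule qb_pascal[OF g True nN w])
      have "h k = (- e) ^ Suc k' * (w ^ Suc k' * qbinom lam n (Suc k')) * Pp lam u (Suc k') * Rp lam (Suc n) u (Suc k')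
          + (- e) ^ Suc k' * (qbinom lam n k' / w ^ (n - k')) * Pp lam u (Suc k') * Rp lam (Suc n) u (Suc k')"
        unfolding h_def Suc pas by (simp add: algebra_simps)
      also have "\<dots> = A k + B k"
      proof -
        have r1: "Rp lam (Suc n) u (Suc k') = Rp lam n u (Suc k') * sinh (u + of_nat (Suc n) * lam)"
          using True by (simp add: Rp_Suc)
        have r2: "Rp lam (Suc n) u (Suc k') = Rp lam n (u + lam) k'" by (rule Rp_shift)
        have "(- e) ^ Suc k' * (w ^ Suc k' * qbinom lam n (Suc k')) * Pp lam u (Suc k') * Rp lam (Suc n) u (Suc k') = A k"
          unfolding A_def a_def Suc r1 pw using True by (simp add: algebra_simps)
        moreover have "(- e) ^ Suc k' * (qbinom lam n k' / w ^ (n - k')) * Pp lam u (Suc k') * Rp lam (Suc n) u (Suc k') = B k"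
          unfolding B_def b_def Suc r2 Pp_shift by simp
        ultimately show ?thesis by simp
      qed
      finally show ?thesis .
    next
      case False
      then have kn: "k' = n" using that Suc by simp
      show ?thesis unfolding h_def A_def B_def b_def Suc kn
        using g nN by (simp add: qbinom_diag Pp_shift)
    qed
  qed
  have "Hf lam (Suc n) e u = (\<Sum>k = 0..Suc n. A k) + (\<Sum>k = 0..Suc n. B k)"
    unfolding Hf_def sum.distrib[symmetric] h_def[symmetric] by (rule sum.cong) (auto simp: hterm)
  also have "(\<Sum>k = 0..Suc n. A k) = (\<Sum>k = 0..n. a k)"
    unfolding A_def by simp
  also have "\<dots> = sinh (u + of_nat (Suc n) * lam) * Hf lam n (e * w) u"
    unfolding a_def Hf_def sum_distrib_left by (rule sum.cong) (auto simp: algebra_simps)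
  also have "(\<Sum>k = 0..Suc n. B k) = (\<Sum>k = 0..n. b k)"
    unfolding B_def sum.atLeast0_atMost_Suc_shift by simp
  also have "\<dots> = - (e / w ^ n * sinh u * Hf lam n (e * w) (u + lam))"
    unfolding b_def Hf_def sum_distrib_left sum_negf[symmetric]
  proof (rule sum.cong)
    fix k assume "k \<in> {0..n}"
    then have kn: "k \<le> n" by simp
    have "w ^ n = w ^ k * w ^ (n - k)" using kn by (simp add: power_add[symmetric])
    then show "(- e) ^ Suc k * qbinom lam n k / w ^ (n - k) * (sinh u * Pp lam (u + lam) k) * Rp lam n (u + lam) k =
         - (e / w ^ n * sinh u * ((- (e * w)) ^ k * qbinom lam n k * Pp lam (u + lam) k * Rp lam n (u + lam) k))"
      using wnz unfolding pw by (simp add: field_simps)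
  qed simp
  finally show ?thesis by simp
qed

lemma lgen_mono: "lgen lam N \<Longrightarrow> M \<le> N \<Longrightarrow> lgen lam M"
  unfolding lgen_def by auto

lemma H_shift:
  assumes g: "lgen lam N"
  shows "n \<le> N \<Longrightarrow> m \<le> n \<Longrightarrow> Hf lam n (exp lam ^ (2 * m) / exp lam ^ n) (u + lam)
          = exp lam ^ n / exp lam ^ (2 * m) * Hf lam n (exp lam ^ (2 * m) / exp lam ^ n) u"
proof (induction n arbitrary: m u)
  case 0
  then show ?case by (simp add: Hf_def qbinom_def qfact_def Rp_def)
next
  case (Suc n)
  define q where "q = exp lam"
  have qnz: "q \<noteq> 0" unfolding q_def by simp
  have eq: "exp (of_nat (Suc n) * lam) = q ^ Suc n" unfolding q_def by (rule exp_nat)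
  show ?case
  proof (cases "m \<le> n")
    case True
    define e where "e = q ^ (2 * m) / q ^ Suc n"
    define K where "K u = Hf lam n (q ^ (2 * m) / q ^ n) u" for u
    have ew: "e * q = q ^ (2 * m) / q ^ n" unfolding e_def using qnz by (simp add: field_simps)
    have IH: "K (u + lam) = q ^ n / q ^ (2 * m) * K u" for u
      unfolding K_def q_def using Suc True by simp
    have form: "Hf lam (Suc n) e u = K u * exp u * sinh (of_nat (Suc n) * lam)" for u
    proof -
      have "Hf lam (Suc n) e u = sinh (u + of_nat (Suc n) * lam) * K u - e / q ^ n * sinh u * K (u + lam)"
        using H_rec[OF g Suc(2), of q e u, unfolded ew] unfolding K_def q_def by simp
      also have "\<dots> = K u * (sinh (u + of_nat (Suc n) * lam) - sinh u / exp (of_nat (Suc n) * lam))"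
        unfolding IH eq e_def using qnz by (simp add: field_simps power_add[symmetric] mult_2)
      also have "\<dots> = K u * exp u * sinh (of_nat (Suc n) * lam)"
        by (simp add: sinh_shift1)
      finally show ?thesis .
    qed
    show ?thesis unfolding q_def[symmetric] e_def[symmetric] form IH
      using qnz by (simp add: exp_add q_def[symmetric] field_simps)
  next
    case False
    then have m: "m = Suc n" using Suc by simp
    define e where "e = q ^ (2 * m) / q ^ Suc n"
    define K where "K u = Hf lam n (q ^ (2 * n) / q ^ n) u" for u
    have ew: "e * inverse q = q ^ (2 * n) / q ^ n" unfolding e_def m using qnz
      by (simp add: field_simps power_add[symmetric] mult_2)
    have IH: "K (u + lam) = q ^ n / q ^ (2 * n) * K u" for u
      unfolding K_def q_def using Suc by simp
    have form: "Hf lam (Suc n) e u = K u / exp u * sinh (of_nat (Suc n) * lam)" for u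
    proof -
      have "Hf lam (Suc n) e u = sinh (u + of_nat (Suc n) * lam) * K u - e / (inverse q) ^ n * sinh u * K (u + lam)"
        using H_rec[OF g Suc(2), of "inverse q" e u, unfolded ew] unfolding K_def q_def by simp
      also have "\<dots> = K u * (sinh (u + of_nat (Suc n) * lam) - exp (of_nat (Suc n) * lam) * sinh u)"
        unfolding IH eq e_def m using qnz by (simp add: field_simps power_add[symmetric] mult_2 power_inverse)
      also have "\<dots> = K u / exp u * sinh (of_nat (Suc n) * lam)"
        by (simp add: sinh_shift2)
      finally show ?thesis .
    qed
    have "Hf lam (Suc n) e (u + lam) = q ^ Suc n / q ^ (2 * m) * Hf lam (Suc n) e u"
      unfolding form IH m using qnz by (simp add: exp_add q_def[symmetric] field_simps)
    then show ?thesis unfolding e_def q_def .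
  qed
qed

lemma KB: assumes g: "lgen lam N" and jp: "j < p" "Suc p \<le> N"
  shows "qbinom lam (Suc p) (Suc j) * sinh (u + of_nat j * lam) - qbinom lam p j * sinh (u + of_nat p * lam)
       = qbinom lam p (Suc j) * sinh (u - lam)"
proof -
  have nz: "qnum lam (p - j) \<noteq> 0" using qnum_nz[OF g] jp by auto
  have q2: "qbinom lam (Suc p) (Suc j) * qnum lam (p - j) = qbinom lam p (Suc j) * qnum lam (Suc p)"
    by (rule qb_Q2[OF g jp])
  have q1: "qbinom lam p j * qnum lam (p - j) = qbinom lam p (Suc j) * qnum lam (Suc j)"
    by (rule qb_Q1[OF g jp(1)]) (use jp in simp)
  have s: "sinh (of_nat (Suc p) * lam) * sinh (u + of_nat j * lam) - sinh (of_nat (Suc j) * lam) * sinh (u + of_nat p * lam)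
      = sinh (of_nat (p - j) * lam) * sinh (u - lam)"
  proof -
    obtain d where pd: "p = j + d" using jp by (metis less_imp_add_positive)
    show ?thesis
      using sinh_id1[of "of_nat (Suc j) * lam" "of_nat d * lam" "u - lam"] unfolding pd
      by (simp add: algebra_simps)
  qed
  have "(qbinom lam (Suc p) (Suc j) * sinh (u + of_nat j * lam) - qbinom lam p j * sinh (u + of_nat p * lam)) * qnum lam (p - j)
      = (qbinom lam (Suc p) (Suc j) * qnum lam (p - j)) * sinh (u + of_nat j * lam) - (qbinom lam p j * qnum lam (p - j)) * sinh (u + of_nat p * lam)"
    by (simp add: algebra_simps)
  also have "\<dots> = qbinom lam p (Suc j) * (qnum lam (Suc p) * sinh (u + of_nat j * lam) - qnum lam (Suc j) * sinh (u + of_nat p * lam))"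
    unfolding q1 q2 by (simp add: algebra_simps)
  also have "qnum lam (Suc p) * sinh (u + of_nat j * lam) - qnum lam (Suc j) * sinh (u + of_nat p * lam)
     = (sinh (of_nat (Suc p) * lam) * sinh (u + of_nat j * lam) - sinh (of_nat (Suc j) * lam) * sinh (u + of_nat p * lam)) / sinh lam"
    unfolding qnum_def by (simp add: diff_divide_distrib)
  also have "\<dots> = sinh (u - lam) * qnum lam (p - j)"
    unfolding s qnum_def by simp
  finally show ?thesis using nz by (simp add: mult.assoc)
qed

lemma KA: assumes g: "lgen lam N" and jp: "j \<le> p'" "Suc p' \<le> n" "n \<le> N"
  shows "qbinom lam (Suc p') (Suc j) * (sinh (u + (of_nat n - of_nat (Suc p')) * lam) * sinh (u + of_nat j * lam)
          - sinh (u - lam) * sinh (u + (of_nat n + of_nat (Suc j) - of_nat (Suc p')) * lam))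
       = sinh (of_nat (Suc p') * lam) * sinh (lam * (of_nat n + 1 - of_nat (Suc p'))) * qbinom lam p' j"
proof -
  obtain r where nr: "n = Suc p' + r" using jp by (metis le_add_diff_inverse)
  have q3: "qbinom lam p' j * qnum lam (Suc p') = qbinom lam (Suc p') (Suc j) * qnum lam (Suc j)"
    by (rule qb_Q3[OF g jp(1)]) (use jp in simp)
  have q3': "qbinom lam p' j * sinh (of_nat (Suc p') * lam) = qbinom lam (Suc p') (Suc j) * sinh (of_nat (Suc j) * lam)"
  proof -
    have "1 \<in> {1..N}" using jp by simp
    then have "sinh (of_nat 1 * lam) \<noteq> 0" using g unfolding lgen_def by blast
    then have sl: "sinh lam \<noteq> 0" by simp
    from q3 show ?thesis unfolding qnum_def using sl by (simp add: field_simps)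
  qed
  have id: "sinh (u + (of_nat n - of_nat (Suc p')) * lam) * sinh (u + of_nat j * lam)
          - sinh (u - lam) * sinh (u + (of_nat n + of_nat (Suc j) - of_nat (Suc p')) * lam)
        = sinh (of_nat (Suc r) * lam) * sinh (of_nat (Suc j) * lam)"
    using sinh_id2[of "u - lam" "of_nat (Suc r) * lam" "of_nat (Suc j) * lam"] unfolding nr
    by (simp add: algebra_simps)
  have e: "lam * (of_nat n + 1 - of_nat (Suc p')) = of_nat (Suc r) * lam" unfolding nr
    by (simp add: algebra_simps)
  show ?thesis unfolding id e
    using q3' by (simp add: algebra_simps)
qed

lemma identB: assumes g: "lgen lam n" and pn: "Suc p \<le> n"
  shows "exp (2 * lam * sigma) * sinh (u + of_nat p * lam) * f_poly n lam p sigma u + f_poly n lam (Suc p) sigma u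
       = sinh (u + of_nat n * lam) * f_poly n lam p sigma (u - lam)"
proof -
  define E where "E = exp (2 * lam * sigma)"
  define c where "c k = (- E) ^ k" for k :: nat
  define t1 where "t1 k = c k * qbinom lam (Suc p) k * Pp lam u k * Qp n lam (Suc p) u k" for k
  define t2 where "t2 k = E * sinh (u + of_nat p * lam) * (c k * qbinom lam p k * Pp lam u k * Qp n lam p u k)" for k
  define t3 where "t3 k = sinh (u + of_nat n * lam) * (c k * qbinom lam p k * Pp lam (u - lam) k * Qp n lam p (u - lam) k)" for k
  define T2 where "T2 k = (if k = 0 then 0 else t2 (k - 1))" for k
  define T3 where "T3 k = (if k \<le> p then t3 k else 0)" for k
  have tw: "t1 k + T2 k = T3 k" if "k \<le> Suc p" for k
  proof (cases k)
    case 0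
    then show ?thesis using g pn unfolding t1_def T2_def T3_def t3_def c_def
      by (simp add: qbinom_0 Qp_top)
  next
    case (Suc j)
    show ?thesis
    proof (cases "j < p")
      case True
      have kb: "qbinom lam (Suc p) (Suc j) * sinh (u + of_nat j * lam) - qbinom lam p j * sinh (u + of_nat p * lam)
       = qbinom lam p (Suc j) * sinh (u - lam)" by (rule KB[OF g True pn])
      have qa: "Qp n lam (Suc p) u (Suc j) = Qp n lam p u j" by (rule Qp_Suc)
      have qb: "Qp n lam p (u - lam) (Suc j) * sinh (u + of_nat n * lam) = Qp n lam p u j"
        using Qp_top[of "Suc j" p n lam u] True qa by simp
      have "t1 k + T2 k = c j * Pp lam u j * Qp n lam p u j *
          (- E * (qbinom lam (Suc p) (Suc j) * sinh (u + of_nat j * lam) - qbinom lam p j * sinh (u + of_nat p * lam)))"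
        unfolding t1_def T2_def t2_def Suc qa c_def by (simp add: Pp_Suc algebra_simps)
      also have "\<dots> = T3 k"
        unfolding kb T3_def t3_def Suc c_def using True
        by (simp add: Pp_shiftm qb[symmetric] algebra_simps)
      finally show ?thesis .
    next
      case False
      then have jp: "j = p" using that Suc by simp
      show ?thesis unfolding t1_def T2_def t2_def T3_def Suc jp c_def
        using g pn by (simp add: qbinom_diag Pp_Suc algebra_simps)
    qed
  qed
  have "E * sinh (u + of_nat p * lam) * f_poly n lam p sigma u = (\<Sum>k = 0..p. t2 k)"
    unfolding f_poly_alt E_def[symmetric] t2_def c_def sum_distrib_left by simp
  also have "\<dots> = (\<Sum>k = 0..Suc p. T2 k)"
    unfolding T2_def sum.atLeast0_atMost_Suc_shift by simp
  finally have s2: "E * sinh (u + of_nat p * lam) * f_poly n lam p sigma u = (\<Sum>k = 0..Suc p. T2 k)" .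
  have "sinh (u + of_nat n * lam) * f_poly n lam p sigma (u - lam) = (\<Sum>k = 0..p. t3 k)"
    unfolding f_poly_alt E_def[symmetric] t3_def c_def sum_distrib_left by simp
  also have "\<dots> = (\<Sum>k = 0..Suc p. T3 k)"
    unfolding T3_def by simp
  finally have s3: "sinh (u + of_nat n * lam) * f_poly n lam p sigma (u - lam) = (\<Sum>k = 0..Suc p. T3 k)" .
  have s1: "f_poly n lam (Suc p) sigma u = (\<Sum>k = 0..Suc p. t1 k)"
    unfolding f_poly_alt E_def[symmetric] t1_def c_def by simp
  show ?thesis unfolding E_def[symmetric] s1 s2 s3
    by (subst add.commute, subst sum.distrib[symmetric]) (rule sum.cong, auto simp: tw)
qed

lemma identA: assumes g: "lgen lam n" and pn: "Suc p' \<le> n"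
  shows "sinh (u + (of_nat n - of_nat (Suc p')) * lam) * f_poly n lam (Suc p') sigma u
       + exp (2 * lam * sigma) * (sinh (of_nat (Suc p') * lam) * sinh (lam * (of_nat n + 1 - of_nat (Suc p'))))
         * f_poly n lam p' sigma u
       = sinh (u + of_nat n * lam) * f_poly n lam (Suc p') sigma (u - lam)"
proof -
  define p where "p = Suc p'"
  define E where "E = exp (2 * lam * sigma)"
  define B2 where "B2 = sinh (of_nat (Suc p') * lam) * sinh (lam * (of_nat n + 1 - of_nat (Suc p')))"
  define c where "c k = (- E) ^ k" for k :: nat
  define s1 where "s1 k = sinh (u + (of_nat n - of_nat p) * lam) * (c k * qbinom lam p k * Pp lam u k * Qp n lam p u k)" for k
  define s2 where "s2 k = E * B2 * (c k * qbinom lam p' k * Pp lam u k * Qp n lam p' u k)" for k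
  define s3 where "s3 k = sinh (u + of_nat n * lam) * (c k * qbinom lam p k * Pp lam (u - lam) k * Qp n lam p (u - lam) k)" for k
  define S2 where "S2 k = (if k = 0 then 0 else s2 (k - 1))" for k
  have qtb: "Qp n lam p (u - lam) k * sinh (u + of_nat n * lam) = sinh (u + (of_nat n + of_nat k - of_nat p) * lam) * Qp n lam p u k"
    if "k \<le> p" for k
    using Qp_top[OF that, of n lam u] Qp_bot[OF that, of n lam u] by simp
  have tw: "s1 k + S2 k = s3 k" if "k \<le> p" for k
  proof (cases k)
    case 0
    then show ?thesis using g pn qtb[of 0] unfolding s1_def S2_def s3_def c_def p_def
      by (simp add: qbinom_0 algebra_simps)
  next
    case (Suc j)
    then have jp: "j \<le> p'" using that p_def by simp
    have ka: "qbinom lam (Suc p') (Suc j) * (sinh (u + (of_nat n - of_nat (Suc p')) * lam) * sinh (u + of_nat j * lam)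
          - sinh (u - lam) * sinh (u + (of_nat n + of_nat (Suc j) - of_nat (Suc p')) * lam))
       = B2 * qbinom lam p' j" unfolding B2_def by (rule KA[OF g jp pn order.refl])
    have qa: "Qp n lam p' u j = Qp n lam p u (Suc j)" unfolding p_def by (rule Qp_Suc[symmetric])
    have pa: "Pp lam u (Suc j) = Pp lam u j * sinh (u + of_nat j * lam)" by (rule Pp_Suc)
    have pb: "Pp lam (u - lam) (Suc j) = sinh (u - lam) * Pp lam u j" by (rule Pp_shiftm)
    have qc: "Qp n lam p (u - lam) (Suc j) * sinh (u + of_nat n * lam)
       = sinh (u + (of_nat n + of_nat (Suc j) - of_nat (Suc p')) * lam) * Qp n lam p u (Suc j)"
      using qtb[of "Suc j"] that Suc unfolding p_def by simp
    have e1: "s1 k = c (Suc j) * qbinom lam p (Suc j) * Pp lam u j * Qp n lam p u (Suc j)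
        * (sinh (u + (of_nat n - of_nat (Suc p')) * lam) * sinh (u + of_nat j * lam))"
      unfolding s1_def Suc pa p_def by (simp add: algebra_simps)
    have e2: "S2 k = E * B2 * c j * qbinom lam p' j * Pp lam u j * Qp n lam p u (Suc j)"
      unfolding S2_def s2_def Suc qa[symmetric] by simp
    have e3: "s3 k = c (Suc j) * qbinom lam p (Suc j) * Pp lam u j * (Qp n lam p (u - lam) (Suc j) * sinh (u + of_nat n * lam))
        * sinh (u - lam)"
      unfolding s3_def Suc pb by (simp add: algebra_simps)
    have "s1 k + S2 k - s3 k = c j * Pp lam u j * Qp n lam p u (Suc j) *
        (- E * (qbinom lam (Suc p') (Suc j) * (sinh (u + (of_nat n - of_nat (Suc p')) * lam) * sinh (u + of_nat j * lam)
          - sinh (u - lam) * sinh (u + (of_nat n + of_nat (Suc j) - of_nat (Suc p')) * lam))) + E * B2 * qbinom lam p' j)"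
      unfolding e1 e2 e3 qc unfolding c_def p_def by (simp add: algebra_simps)
    also have "\<dots> = 0" unfolding ka by simp
    finally show ?thesis by simp
  qed
  have "E * B2 * f_poly n lam p' sigma u = (\<Sum>k = 0..p'. s2 k)"
    unfolding f_poly_alt E_def[symmetric] s2_def c_def sum_distrib_left by simp
  also have "\<dots> = (\<Sum>k = 0..p. S2 k)"
    unfolding S2_def p_def sum.atLeast0_atMost_Suc_shift by simp
  finally have x2: "E * B2 * f_poly n lam p' sigma u = (\<Sum>k = 0..p. S2 k)" .
  have x3: "sinh (u + of_nat n * lam) * f_poly n lam p sigma (u - lam) = (\<Sum>k = 0..p. s3 k)"
    unfolding f_poly_alt E_def[symmetric] s3_def c_def sum_distrib_left by simp
  have x1: "sinh (u + (of_nat n - of_nat p) * lam) * f_poly n lam p sigma u = (\<Sum>k = 0..p. s1 k)"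
    unfolding f_poly_alt E_def[symmetric] s1_def c_def sum_distrib_left by simp
  have tot: "(\<Sum>k = 0..p. s1 k) + (\<Sum>k = 0..p. S2 k) = (\<Sum>k = 0..p. s3 k)"
    by (subst sum.distrib[symmetric]) (rule sum.cong, auto simp: tw)
  have "sinh (u + (of_nat n - of_nat p) * lam) * f_poly n lam p sigma u + E * B2 * f_poly n lam p' sigma u
      = sinh (u + of_nat n * lam) * f_poly n lam p sigma (u - lam)"
    by (simp only: x1 x2 x3 tot)
  then show ?thesis unfolding E_def B2_def p_def by (simp add: mult.assoc)
qed

lemma identC: assumes g: "lgen lam n" and mn: "m \<le> n"
  shows "exp (2 * lam * (of_nat m - of_nat n / 2)) * f_poly n lam n (of_nat m - of_nat n / 2) u
       = f_poly n lam n (of_nat m - of_nat n / 2) (u - lam)"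
proof -
  define q where "q = exp lam"
  have qnz: "q \<noteq> 0" unfolding q_def by simp
  have E: "exp (2 * lam * (of_nat m - of_nat n / 2)) = q ^ (2 * m) / q ^ n"
  proof -
    have "2 * lam * (of_nat m - of_nat n / 2) = of_nat (2 * m) * lam - of_nat n * lam"
      by (simp add: algebra_simps)
    then show ?thesis unfolding q_def by (simp only: exp_diff exp_nat)
  qed
  have F: "f_poly n lam n sigma v = Hf lam n (exp (2 * lam * sigma)) v" for sigma v
    unfolding f_poly_alt Hf_def Qp_Rp ..
  have "Hf lam n (q ^ (2 * m) / q ^ n) (u - lam + lam) = q ^ n / q ^ (2 * m) * Hf lam n (q ^ (2 * m) / q ^ n) (u - lam)"
    using H_shift[OF g order.refl mn, of "u - lam"] unfolding q_def .
  then show ?thesis unfolding F E using qnz by (simp add: field_simps)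
qed

lemma f_poly_0: "f_poly n lam 0 sigma u = 1"
  by (simp add: f_poly_def qbinom_def qfact_def)

theorem proposition3:
  fixes n m :: nat and lam u :: complex
    and h_in1 h_in2 h_out1 h_out2 :: complex
    and v_in v_out :: "nat \<Rightarrow> complex"
  assumes n_pos: "n \<ge> 1"
    and m_le: "m \<le> n"
    and lam_gen: "\<forall>j \<in> {1..n}. sinh (of_nat j * lam) \<noteq> 0"
    and f_gen: "\<forall>p \<in> {0..n}. f_poly n lam p (of_nat m - of_nat n / 2) u \<noteq> 0"
    and hout1_nz: "h_out1 \<noteq> 0"
    and h_in2_def: "h_in2 = h_in1 * h_out2 / h_out1 * exp (2 * lam * (of_nat m - of_nat n / 2))"
    and v_out_def: "\<forall>j \<in> {1..n+1}. v_out j = a_coef n lam u 1 * (h_in1 * v_in j / h_out1)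
         * (f_poly n lam (j - 1) (of_nat m - of_nat n / 2) (u - lam)
            / f_poly n lam (j - 1) (of_nat m - of_nat n / 2) u)"
    and v_in_rec: "\<forall>j \<in> {1..n}. v_in (j + 1) = 1 / b_coef n lam j * (v_in j * h_out2 / h_out1)
         * (f_poly n lam j (of_nat m - of_nat n / 2) u
            / f_poly n lam (j - 1) (of_nat m - of_nat n / 2) u)"
  shows "\<forall>j \<in> {1..n+1}.
           a_coef n lam u j * v_in j * h_in1 + b_coef n lam (j - 1) * v_in (j - 1) * h_in2
             = v_out j * h_out1
         \<and> a_coef n lam u (n + 2 - j) * v_in j * h_in2 + b_coef n lam j * v_in (j + 1) * h_in1
             = v_out j * h_out2"
proof
  fix j assume j: "j \<in> {1..n+1}"
  define sg where "sg = (of_nat m - of_nat n / 2 :: complex)"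
  define E where "E = exp (2 * lam * sg)"
  define F where "F p = f_poly n lam p sg u" for p
  define G where "G p = f_poly n lam p sg (u - lam)" for p
  define c where "c = h_out2 / h_out1"
  have g: "lgen lam n" using lam_gen unfolding lgen_def .
  have Fnz: "p \<le> n \<Longrightarrow> F p \<noteq> 0" for p using f_gen unfolding F_def sg_def by auto
  have hin2: "h_in2 = h_in1 * c * E" unfolding c_def E_def sg_def h_in2_def by simp
  have vout: "v_out j = sinh (u + of_nat n * lam) * h_in1 * v_in j * G (j - 1) / F (j - 1) / h_out1"
    using bspec[OF v_out_def j] unfolding F_def G_def sg_def a_coef_def by (simp add: mult_ac)
  have vrec: "v_in (Suc i) = v_in i * c * F i / (b_coef n lam i * F (i - 1))" if "i \<in> {1..n}" for i
    using bspec[OF v_in_rec that] unfolding F_def c_def sg_def by simp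
  have b0: "b_coef n lam 0 = 0" by (simp add: b_coef_def)
  have bn: "b_coef n lam (Suc n) = 0" by (simp add: b_coef_def)
  have bsq: "b_coef n lam i * b_coef n lam i = sinh (of_nat i * lam) * sinh (lam * (of_nat n + 1 - of_nat i))" for i
    unfolding b_coef_def by (metis power2_csqrt power2_eq_square)
  have bnz: "b_coef n lam i \<noteq> 0" if "i \<in> {1..n}" for i
  proof -
    have "sinh (of_nat i * lam) \<noteq> 0" using lam_gen that by blast
    moreover have "n + 1 - i \<in> {1..n}" using that by auto
    then have "sinh (of_nat (n + 1 - i) * lam) \<noteq> 0" using lam_gen by blast
    then have "sinh (lam * (of_nat n + 1 - of_nat i)) \<noteq> 0" using that by (simp add: of_nat_diff algebra_simps)
    ultimately show ?thesis unfolding b_coef_def by simp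
  qed
  show "a_coef n lam u j * v_in j * h_in1 + b_coef n lam (j - 1) * v_in (j - 1) * h_in2 = v_out j * h_out1
      \<and> a_coef n lam u (n + 2 - j) * v_in j * h_in2 + b_coef n lam j * v_in (j + 1) * h_in1 = v_out j * h_out2"
  proof
    show "a_coef n lam u j * v_in j * h_in1 + b_coef n lam (j - 1) * v_in (j - 1) * h_in2 = v_out j * h_out1"
    proof (cases "j = 1")
      case True
      show ?thesis using hout1_nz unfolding vout unfolding True F_def G_def
        by (simp add: b0 f_poly_0 a_coef_def)
    next
      case False
      then obtain p' where jp: "j = Suc (Suc p')" using j by (metis atLeastAtMost_iff not0_implies_Suc not_one_le_zero Suc_le_eq less_Suc0 linorder_not_le)
      define p where "p = Suc p'"
      have pn: "Suc p' \<le> n" using j jp by simp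
      have A: "sinh (u + (of_nat n - of_nat p) * lam) * F p + E * (b_coef n lam p * b_coef n lam p) * F p'
          = sinh (u + of_nat n * lam) * G p"
        using identA[OF g pn, of u sg] unfolding F_def G_def E_def bsq p_def .
      have V: "v_in j = v_in p * c * F p / (b_coef n lam p * F p')"
        using vrec[of p] pn unfolding jp p_def by simp
      have ak: "a_coef n lam u j = sinh (u + (of_nat n - of_nat p) * lam)"
        unfolding a_coef_def jp p_def by (simp add: algebra_simps)
      have nz: "b_coef n lam p \<noteq> 0" "F p \<noteq> 0" "F p' \<noteq> 0"
        using bnz[of p] Fnz[of p] Fnz[of p'] pn unfolding p_def by auto
      have "v_out j * h_out1 = h_in1 * v_in j / F p * (sinh (u + of_nat n * lam) * G p)"
        unfolding vout using hout1_nz jp p_def by simp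
      also have "\<dots> = h_in1 * v_in j / F p * (sinh (u + (of_nat n - of_nat p) * lam) * F p
            + E * (b_coef n lam p * b_coef n lam p) * F p')" unfolding A ..
      also have "\<dots> = a_coef n lam u j * v_in j * h_in1 + b_coef n lam (j - 1) * v_in (j - 1) * h_in2"
      proof -
        have jm: "j - 1 = p" unfolding jp p_def by simp
        show ?thesis unfolding ak hin2 jm V using nz by (simp add: field_simps)
      qed
      finally show ?thesis by simp
    qed
    show "a_coef n lam u (n + 2 - j) * v_in j * h_in2 + b_coef n lam j * v_in (j + 1) * h_in1 = v_out j * h_out2"
    proof (cases "j = n + 1")
      case True
      have C: "E * F n = G n" using identC[OF g m_le, of u] unfolding E_def F_def G_def sg_def .
      have a1: "a_coef n lam u 1 = sinh (u + of_nat n * lam)" unfolding a_coef_def by simp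
      have a2: "a_coef n lam u (n + 2 - j) = sinh (u + of_nat n * lam)" unfolding True a_coef_def by simp
      show ?thesis using hout1_nz Fnz[of n] unfolding a2 vout unfolding True C[symmetric] hin2 c_def
        by (simp add: bn field_simps C)
    next
      case False
      then obtain p where jp: "j = Suc p" and pn: "Suc p \<le> n" using j
        by (metis atLeastAtMost_iff Suc_eq_plus1 le_SucE not0_implies_Suc not_one_le_zero)
      have B: "E * sinh (u + of_nat p * lam) * F p + F (Suc p) = sinh (u + of_nat n * lam) * G p"
        using identB[OF g pn, of sg u] unfolding F_def G_def E_def .
      have V: "v_in (j + 1) = v_in j * c * F (Suc p) / (b_coef n lam j * F p)"
        using vrec[of j] pn unfolding jp by simp
      have ak: "a_coef n lam u (n + 2 - j) = sinh (u + of_nat p * lam)"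
        unfolding a_coef_def jp using pn by (simp add: of_nat_diff algebra_simps)
      have nz: "b_coef n lam j \<noteq> 0" "F p \<noteq> 0"
        using bnz[of j] Fnz[of p] pn jp by auto
      have "v_out j * h_out2 = h_in1 * v_in j * c / F p * (sinh (u + of_nat n * lam) * G p)"
        unfolding vout c_def using hout1_nz jp by (simp add: mult_ac)
      also have "\<dots> = h_in1 * v_in j * c / F p * (E * sinh (u + of_nat p * lam) * F p + F (Suc p))"
        unfolding B ..
      also have "\<dots> = a_coef n lam u (n + 2 - j) * v_in j * h_in2 + b_coef n lam j * v_in (j + 1) * h_in1"
        unfolding ak hin2 V using nz by (simp add: field_simps)
      finally show ?thesis by simp
    qed
  qed
qed

end
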